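(* Consider the FDMA/TDMA scheme at the serving AP of a typical UE, where the typical UE is the first UE in the ordering and is assigned SC 1, and $K_0\ge 0$ other UEs follow it in the ordering. For $l\ge 0$ let $\mathcal{A}_l$ be the event that exactly $l$ of the other $K_0$ UEs are assigned SC 1 (so the delay is $L=l$). Then $$\Pr\{\mathcal{A}_0\mid K_0\}=\begin{cases}1,& 0\le K_0\le N-1,\\ \frac{2N-K_0-1}{N},& N\le K_0\le 2N-2,\\ 0,& K_0\ge 2N-1,\end{cases}$$ and for $l\ge 1$ $$\Pr\{\mathcal{A}_l\mid K_0\}=\begin{cases}0,& 0\le K_0\le lN-1,\\ \frac{K_0-lN+1}{N},& lN\le K_0\le (l+1)N-1,\\ \frac{(l+2)N-K_0-1}{N},& (l+1)N\le K_0\le (l+2)N-2,\\ 0,& K_0\ge (l+2)N-1.\end{cases}$$ Consequently, if $K_0$ is random with PMF $$\Pr\{K_0=k\}=\frac{3.5^{4.5}\,\Gamma(k+4.5)\,\tau^{4.5}}{\Gamma(4.5)\,k!\,(1+3.5\tau)^{k+4.5}},\quad k\ge 0,$$ and independent of the scheduling randomness, then $\Pr\{L=l\}=\sum_{k\ge 0}\Pr\{K_0=k\}\Pr\{\mathcal{A}_l\mid K_0=k\}$.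
   Context: There are $N\ge1$ subchannels (SCs). FDMA/TDMA scheme: the UEs of an AP are arranged in an order and split into consecutive blocks of $N$ UEs (the last block possibly smaller); within each block the UEs, in order, are assigned SCs sequentially uniformly at random without replacement from $\{1,\dots,N\}$, the available set being reset to $\{1,\dots,N\}$ at the start of each block; assignments are independent across blocks. UEs sharing an SC are time-multiplexed on it. Here the serving AP has $K_0+1$ UEs in total: the typical UE first (assigned SC 1), followed by $K_0$ other UEs in random order. The delay $L$ of the typical UE is the number of other UEs sharing its SC. *)

theory Defs
  imports "HOL-Probability.Probability"
begin

fun draw_seq :: "nat set \<Rightarrow> nat \<Rightarrow> nat list pmf" where
  "draw_seq A 0 = return_pmf []"
| "draw_seq A (Suc m) =
     bind_pmf (pmf_of_set A) (\<lambda>x.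
     bind_pmf (draw_seq (A - {x}) m) (\<lambda>xs. return_pmf (x # xs)))"

text \<open>Blocks of (at most) N consecutive UEs, each block drawing from the full
  set {1..N} afresh, independently across blocks. blocks N c r schedules
  r remaining UEs using at most c blocks (c = r always suffices when N >= 1;
  superfluous blocks are empty).\<close>
fun blocks :: "nat \<Rightarrow> nat \<Rightarrow> nat \<Rightarrow> nat list pmf" where
  "blocks N 0 r = return_pmf []"
| "blocks N (Suc c) r =
     bind_pmf (draw_seq {1..N} (min N r)) (\<lambda>b.
     bind_pmf (blocks N c (r - min N r)) (\<lambda>bs. return_pmf (b @ bs)))"

text \<open>SC assignment of all K0+1 UEs of the serving AP, in order: the typical UE
  is first and has SC 1; the remaining UEs of its block draw sequentially from
  the remaining SCs {1..N} - {1}; subsequent blocks draw from {1..N}.\<close>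
definition schedule :: "nat \<Rightarrow> nat \<Rightarrow> nat list pmf" where
  "schedule N K0 =
     bind_pmf (draw_seq ({1..N} - {1}) (min N (K0 + 1) - 1)) (\<lambda>first.
     bind_pmf (blocks N (K0 + 1) (K0 + 1 - min N (K0 + 1))) (\<lambda>rest.
     return_pmf (1 # first @ rest)))"

definition delay_pmf :: "nat \<Rightarrow> nat \<Rightarrow> nat pmf" where
  "delay_pmf N K0 = map_pmf (\<lambda>sc. count_list (tl sc) 1) (schedule N K0)"

end

theory Submission
  imports Defs
begin

lemma pmf_bind_nat_series:
  fixes K :: "nat pmf" and f :: "nat \<Rightarrow> 'b pmf"
  shows "pmf (bind_pmf K f) l = (\<Sum>k. pmf K k * pmf (f k) l)"
proof -
  have "pmf (bind_pmf K f) l = integral\<^sup>L (count_space UNIV) (\<lambda>k. pmf K k * pmf (f k) l)"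
    unfolding pmf_bind measure_pmf_eq_density
    by (subst integral_density) (auto simp: pmf_nonneg)
  also have "\<dots> = (\<Sum>k. pmf K k * pmf (f k) l)"
  proof (rule integral_count_space_nat)
    have "integrable (measure_pmf K) (\<lambda>k. pmf (f k) l)"
      by (rule measure_pmf.integrable_const_bound[where B=1]) (auto simp: pmf_le_1)
    then show "integrable (count_space UNIV) (\<lambda>k. pmf K k * pmf (f k) l)"
      unfolding measure_pmf_eq_density
      by (subst (asm) integrable_density) (auto simp: pmf_nonneg)
  qed
  finally show ?thesis .
qed


lemma draw_seq_set:
  "finite A \<Longrightarrow> m \<le> card A \<Longrightarrow> xs \<in> set_pmf (draw_seq A m) \<Longrightarrow>
    set xs \<subseteq> A \<and> distinct xs \<and> length xs = m"
proof (induction m arbitrary: A xs)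
  case 0
  then show ?case by simp
next
  case (Suc m)
  then have ne: "A \<noteq> {}" by auto
  from Suc.prems obtain x ys where x: "x \<in> A" and ys: "ys \<in> set_pmf (draw_seq (A - {x}) m)"
    and xs: "xs = x # ys"
    using ne by (auto simp: set_pmf_of_set)
  have "card (A - {x}) = card A - 1" using x Suc.prems by simp
  with Suc.prems have "m \<le> card (A - {x})" by simp
  from Suc.IH[OF _ this ys] Suc.prems have "set ys \<subseteq> A - {x} \<and> distinct ys \<and> length ys = m" by simp
  then show ?case using xs x by auto
qed

definition bern_val :: "real \<Rightarrow> nat \<Rightarrow> real" where
  "bern_val p v = (if v = 1 then p else if v = 0 then 1 - p else 0)"

lemma draw_seq_count:
  "finite A \<Longrightarrow> a \<in> A \<Longrightarrow> m \<le> card A \<Longrightarrow>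
    pmf (map_pmf (\<lambda>xs. count_list xs a) (draw_seq A m)) v = bern_val (m / card A) v"
proof (induction m arbitrary: A v)
  case 0
  then show ?case by (simp add: bern_val_def indicator_def)
next
  case (Suc m)
  then have ne: "A \<noteq> {}" by auto
  let ?n = "card A"
  have n: "?n \<ge> 1" using Suc.prems by simp
  have eq: "map_pmf (\<lambda>xs. count_list xs a) (draw_seq A (Suc m)) =
      bind_pmf (pmf_of_set A) (\<lambda>x. map_pmf (\<lambda>xs. count_list (x # xs) a) (draw_seq (A - {x}) m))"
    by (simp add: map_bind_pmf map_pmf_def bind_assoc_pmf bind_return_pmf)
  have c: "card (A - {x}) = ?n - 1" if "x \<in> A" for x using that Suc.prems by simp
  have ma: "map_pmf (\<lambda>xs. count_list (a # xs) a) (draw_seq (A - {a}) m) = return_pmf 1"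
  proof -
    have "map_pmf (\<lambda>xs. count_list (a # xs) a) (draw_seq (A - {a}) m) =
          map_pmf (\<lambda>_. 1) (draw_seq (A - {a}) m)"
    proof (rule map_pmf_cong[OF refl])
      fix xs assume "xs \<in> set_pmf (draw_seq (A - {a}) m)"
      from draw_seq_set[OF _ _ this] Suc.prems c[of a] have "a \<notin> set xs" by fastforce
      then show "count_list (a # xs) a = 1" by simp
    qed
    then show ?thesis by (simp add: map_pmf_const)
  qed
  have mx: "pmf (map_pmf (\<lambda>xs. count_list (x # xs) a) (draw_seq (A - {x}) m)) v
        = bern_val (m / (?n - 1)) v" if "x \<in> A - {a}" for x
  proof -
    have "map_pmf (\<lambda>xs. count_list (x # xs) a) (draw_seq (A - {x}) m)
        = map_pmf (\<lambda>xs. count_list xs a) (draw_seq (A - {x}) m)" using that by simp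
    moreover have "pmf (map_pmf (\<lambda>xs. count_list xs a) (draw_seq (A - {x}) m)) v
        = bern_val (m / card (A - {x})) v"
      using Suc.IH[of "A - {x}" v] Suc.prems c[of x] that by auto
    ultimately show ?thesis using c[of x] that n by (simp add: of_nat_diff)
  qed
  have "pmf (map_pmf (\<lambda>xs. count_list xs a) (draw_seq A (Suc m))) v
     = (\<Sum>x\<in>A. pmf (map_pmf (\<lambda>xs. count_list (x # xs) a) (draw_seq (A - {x}) m)) v) / ?n"
    unfolding eq using ne Suc.prems by (subst pmf_bind_pmf_of_set) auto
  also have "(\<Sum>x\<in>A. pmf (map_pmf (\<lambda>xs. count_list (x # xs) a) (draw_seq (A - {x}) m)) v)
     = pmf (map_pmf (\<lambda>xs. count_list (a # xs) a) (draw_seq (A - {a}) m)) v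
       + (\<Sum>x\<in>A - {a}. pmf (map_pmf (\<lambda>xs. count_list (x # xs) a) (draw_seq (A - {x}) m)) v)"
    using Suc.prems by (subst sum.remove[of A a]) auto
  also have "\<dots> = indicator {1} v + (\<Sum>x\<in>A - {a}. bern_val (m / (?n - 1)) v)"
  proof -
    have "(\<Sum>x\<in>A - {a}. pmf (map_pmf (\<lambda>xs. count_list (x # xs) a) (draw_seq (A - {x}) m)) v)
        = (\<Sum>x\<in>A - {a}. bern_val (m / (?n - 1)) v)"
      by (rule sum.cong[OF refl]) (rule mx)
    then show ?thesis unfolding ma by (simp add: indicator_def)
  qed
  also have "\<dots> = indicator {1} v + (?n - 1) * bern_val (m / (?n - 1)) v"
    using Suc.prems n by (simp add: of_nat_diff)
  finally have "pmf (map_pmf (\<lambda>xs. count_list xs a) (draw_seq A (Suc m))) v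
      = (indicator {1} v + (?n - 1) * bern_val (m / (?n - 1)) v) / ?n" .
  also have "\<dots> = bern_val (Suc m / ?n) v"
  proof (cases "?n = 1")
    case True
    then have "m = 0" using Suc.prems by simp
    then show ?thesis using True by (simp add: bern_val_def indicator_def)
  next
    case False
    then have "real ?n - 1 \<noteq> 0" using n by simp
    then show ?thesis using n
      by (auto simp: bern_val_def indicator_def field_simps)
  qed
  finally show ?case .
qed



definition sbv :: "nat \<Rightarrow> real \<Rightarrow> nat \<Rightarrow> real" where
  "sbv q p v = (if v = q then 1 - p else 0) + (if v = Suc q then p else 0)"

lemma distinct_count: "distinct xs \<Longrightarrow> count_list xs a = (if a \<in> set xs then 1 else 0)"
  by (induction xs) auto

lemma draw_seq_0[simp]: "draw_seq A 0 = return_pmf []" by simp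

lemma blocks_zero: "blocks N c 0 = return_pmf []"
  by (induction c) (simp_all add: bind_return_pmf)

lemma full_block_count:
  assumes "N \<ge> 1" "b \<in> set_pmf (draw_seq {1..N} N)"
  shows "count_list b 1 = 1"
proof -
  from draw_seq_set[OF _ _ assms(2)] have h: "set b \<subseteq> {1..N}" "distinct b" "length b = N" by auto
  then have "card (set b) = N" by (simp add: distinct_card)
  then have "set b = {1..N}" using h by (metis card_atLeastAtMost card_subset_eq finite_atLeastAtMost diff_Suc_1)
  then show ?thesis using h assms(1) by (simp add: distinct_count)
qed

lemma blocks_count:
  assumes N: "N \<ge> 1"
  shows "r \<le> c * N \<Longrightarrow> pmf (map_pmf (\<lambda>xs. count_list xs 1) (blocks N c r)) v
           = sbv (r div N) (real (r mod N) / N) v"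
proof (induction c arbitrary: r v)
  case 0
  then show ?case by (simp add: sbv_def indicator_def)
next
  case (Suc c)
  show ?case
  proof (cases "N \<le> r")
    case True
    then have mn: "min N r = N" by simp
    have "map_pmf (\<lambda>xs. count_list xs 1) (blocks N (Suc c) r)
        = bind_pmf (draw_seq {1..N} N) (\<lambda>b. map_pmf (\<lambda>bs. count_list b 1 + count_list bs 1) (blocks N c (r - N)))"
      by (simp add: mn map_bind_pmf map_pmf_def bind_assoc_pmf bind_return_pmf)
    also have "\<dots> = bind_pmf (draw_seq {1..N} N) (\<lambda>b. map_pmf Suc (map_pmf (\<lambda>bs. count_list bs 1) (blocks N c (r - N))))"
    proof (rule bind_pmf_cong[OF refl])
      fix b assume "b \<in> set_pmf (draw_seq {1..N} N)"
      then have "count_list b 1 = 1" by (rule full_block_count[OF N])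
      then show "map_pmf (\<lambda>bs. count_list b 1 + count_list bs 1) (blocks N c (r - N))
          = map_pmf Suc (map_pmf (\<lambda>bs. count_list bs 1) (blocks N c (r - N)))"
        by (simp add: pmf.map_comp o_def)
    qed
    also have "\<dots> = map_pmf Suc (map_pmf (\<lambda>bs. count_list bs 1) (blocks N c (r - N)))" by simp
    finally have eq: "map_pmf (\<lambda>xs. count_list xs 1) (blocks N (Suc c) r) = \<dots>" .
    have le: "r - N \<le> c * N" using Suc.prems by simp
    have dv: "(r - N) div N = r div N - 1" "(r - N) mod N = r mod N" "r div N \<ge> 1"
      using True N le_div_geq[of N r] le_mod_geq[of N r] by simp_all
    show ?thesis
    proof (cases v)
      case 0
      have "pmf (map_pmf Suc (map_pmf (\<lambda>bs. count_list bs 1) (blocks N c (r - N)))) 0 = 0"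
        by (simp add: pmf_eq_0_set_pmf)
      then show ?thesis using 0 dv eq by (simp add: sbv_def)
    next
      case (Suc w)
      have "pmf (map_pmf (\<lambda>xs. count_list xs 1) (blocks N (Suc c) r)) v
          = pmf (map_pmf (\<lambda>bs. count_list bs 1) (blocks N c (r - N))) w"
        unfolding eq Suc by (rule pmf_map_inj') simp
      also have "\<dots> = sbv ((r - N) div N) (real ((r - N) mod N) / N) w" using Suc.IH[OF le] .
      finally show ?thesis using Suc dv by (auto simp: sbv_def)
    qed
  next
    case False
    then have mn: "min N r = r" "r - r = 0" by simp_all
    have "map_pmf (\<lambda>xs. count_list xs 1) (blocks N (Suc c) r)
        = map_pmf (\<lambda>xs. count_list xs 1) (draw_seq {1..N} r)"
      by (simp add: mn blocks_zero bind_return_pmf bind_return_pmf')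
    then show ?thesis using draw_seq_count[of "{1..N}" 1 r v] False N
      by (simp add: sbv_def bern_val_def)
  qed
qed



lemma delay_sbv:
  assumes N: "N \<ge> 1"
  shows "pmf (delay_pmf N K0) v = sbv ((K0 + 1 - min N (K0 + 1)) div N)
           (real ((K0 + 1 - min N (K0 + 1)) mod N) / N) v"
proof -
  let ?m = "min N (K0 + 1) - 1" and ?r = "K0 + 1 - min N (K0 + 1)"
  let ?F = "draw_seq ({1..N} - {1}) ?m" and ?R = "blocks N (K0 + 1) ?r"
  have "delay_pmf N K0 = bind_pmf ?F (\<lambda>f. map_pmf (\<lambda>rs. count_list f 1 + count_list rs 1) ?R)"
    unfolding delay_pmf_def schedule_def
    by (simp add: map_bind_pmf map_pmf_def bind_assoc_pmf bind_return_pmf)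
  also have "\<dots> = bind_pmf ?F (\<lambda>f. map_pmf (\<lambda>rs. count_list rs 1) ?R)"
  proof (rule bind_pmf_cong[OF refl])
    fix f assume f: "f \<in> set_pmf ?F"
    have "?m \<le> card ({1..N} - {1})" using N by simp
    from draw_seq_set[OF _ this f] have "1 \<notin> set f" by auto
    then show "map_pmf (\<lambda>rs. count_list f 1 + count_list rs 1) ?R = map_pmf (\<lambda>rs. count_list rs 1) ?R"
      by simp
  qed
  also have "\<dots> = map_pmf (\<lambda>rs. count_list rs 1) ?R" by simp
  finally have e: "delay_pmf N K0 = map_pmf (\<lambda>rs. count_list rs 1) ?R" .
  have "K0 + 1 \<le> (K0 + 1) * N" using N mult_le_mono2[of 1 N "K0+1"] by simp
  then have "?r \<le> (K0 + 1) * N" by linarith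
  from blocks_count[OF N this, of v] show ?thesis unfolding e .
qed



lemma sbv0: "sbv q p 0 = (if q = 0 then 1 - p else 0)" by (simp add: sbv_def)
lemma sbvl: "sbv q p l = (if l = q then 1 - p else if l = Suc q then p else 0)"
  by (simp add: sbv_def)

lemma rq:
  fixes N K0 :: nat
  assumes N: "N \<ge> 1" and K: "N \<le> K0 + 1"
  defines "r \<equiv> K0 + 1 - min N (K0 + 1)"
  shows "K0 + 1 = (r div N + 1) * N + r mod N" "r mod N < N"
proof -
  have "r = K0 + 1 - N" using K by (simp add: r_def min_def)
  moreover have "r = r div N * N + r mod N" by (rule div_mult_mod_eq[symmetric])
  ultimately show "K0 + 1 = (r div N + 1) * N + r mod N" using K by (simp add: algebra_simps)
  show "r mod N < N" using N by simp
qed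

lemma part1:
  assumes N: "N \<ge> 1" and hK: "K0 + 1 = (q + 1) * N + s" and s: "s < N"
  shows "(if q = 0 then 1 - real s / N else 0) =
        (if K0 \<le> N - 1 then 1
         else if K0 \<le> 2 * N - 2 then (2 * real N - real K0 - 1) / real N
         else 0)"
proof (cases "q = 0")
  case True
  then have k: "K0 + 1 = N + s" using hK by simp
  then have rk: "real K0 = real N + real s - 1" by (metis add_diff_cancel_right' of_nat_1 of_nat_add)
  show ?thesis
  proof (cases "s = 0")
    case True then show ?thesis using k \<open>q = 0\<close> by auto
  next
    case False
    then have "\<not> K0 \<le> N - 1" "K0 \<le> 2 * N - 2" using k s by auto
    then show ?thesis using \<open>q = 0\<close> N rk by (simp add: field_simps)
  qed
next
  case False
  then have a: "N \<le> q * N" using mult_le_mono1[of 1 q N] by simp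
  have h2: "K0 + 1 = N + q * N + s" using hK by (simp add: algebra_simps)
  have "\<not> K0 \<le> N - 1" "\<not> K0 \<le> 2 * N - 2" using h2 a N by linarith+
  then show ?thesis using False by simp
qed

lemma part2:
  assumes N: "N \<ge> 1" and hK: "K0 + 1 = (q + 1) * N + s" and s: "s < N" and l: "l \<ge> 1"
  shows "(if l = q then 1 - real s / N else if l = Suc q then real s / N else 0) =
        (if K0 + 1 \<le> l * N then 0
         else if K0 \<le> (l + 1) * N - 1 then (real K0 - real l * real N + 1) / real N
         else if K0 \<le> (l + 2) * N - 2 then ((real l + 2) * real N - real K0 - 1) / real N
         else 0)"
proof -
  have rk: "real K0 = (real q + 1) * real N + real s - 1"
  proof -
    have "real (K0 + 1) = real ((q + 1) * N + s)" using hK by simp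
    then show ?thesis by (simp add: algebra_simps)
  qed
  consider "q + 1 < l" | "q + 1 = l" | "q = l" | "l < q" by linarith
  then show ?thesis
  proof cases
    case 1
    then have "(q + 2) * N \<le> l * N" by (intro mult_le_mono1) simp
    then have "K0 + 1 \<le> l * N" using hK s by (simp add: algebra_simps)
    then show ?thesis using 1 by auto
  next
    case 2
    show ?thesis
    proof (cases "s = 0")
      case True then show ?thesis using 2 hK by auto
    next
      case False
      then have "\<not> K0 + 1 \<le> l * N" "K0 \<le> (l + 1) * N - 1" using 2 hK s by (auto simp: algebra_simps)
      then show ?thesis using 2 N rk by (auto simp: field_simps)
    qed
  next
    case 3
    show ?thesis
    proof (cases "s = 0")
      case True
      then have "\<not> K0 + 1 \<le> l * N" "K0 \<le> (l + 1) * N - 1" using 3 hK N by (auto simp: algebra_simps)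
      then show ?thesis using 3 N rk True by (auto simp: field_simps)
    next
      case False
      then have "\<not> K0 + 1 \<le> l * N" "\<not> K0 \<le> (l + 1) * N - 1" "K0 \<le> (l + 2) * N - 2"
        using 3 hK s N by (auto simp: algebra_simps)
      then show ?thesis using 3 N rk by (auto simp: field_simps)
    qed
  next
    case 4
    then have "(l + 1) * N \<le> q * N" by (intro mult_le_mono1) simp
    then have "\<not> K0 + 1 \<le> l * N" "\<not> K0 \<le> (l + 1) * N - 1" "\<not> K0 \<le> (l + 2) * N - 2"
      using hK N by (auto simp: algebra_simps)
    then show ?thesis using 4 by auto
  qed
qed

theorem lemma5:
  fixes N :: nat
  assumes "N \<ge> 1"
  shows
   "(\<forall>K0::nat. pmf (delay_pmf N K0) 0 =
        (if K0 \<le> N - 1 then 1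
         else if K0 \<le> 2 * N - 2 then (2 * real N - real K0 - 1) / real N
         else 0))
    \<and> (\<forall>l::nat. \<forall>K0::nat. l \<ge> 1 \<longrightarrow> pmf (delay_pmf N K0) l =
        (if K0 + 1 \<le> l * N then 0
         else if K0 \<le> (l + 1) * N - 1 then (real K0 - real l * real N + 1) / real N
         else if K0 \<le> (l + 2) * N - 2 then ((real l + 2) * real N - real K0 - 1) / real N
         else 0))
    \<and> (\<forall>(\<tau>::real) (K::nat pmf). \<tau> > 0 \<longrightarrow>
        (\<forall>k. pmf K k = 3.5 powr 4.5 * Gamma (real k + 4.5) * \<tau> powr 4.5
                / (Gamma 4.5 * fact k * (1 + 3.5 * \<tau>) powr (real k + 4.5))) \<longrightarrow>
        (\<forall>l. pmf (bind_pmf K (\<lambda>k. delay_pmf N k)) l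
              = (\<Sum>k. pmf K k * pmf (delay_pmf N k) l)))"
  proof (intro conjI allI impI)
  have N0: "N > 0" using assms by simp
  let ?r = "\<lambda>K0. K0 + 1 - min N (K0 + 1)"
  show "pmf (delay_pmf N K0) 0 =
        (if K0 \<le> N - 1 then 1
         else if K0 \<le> 2 * N - 2 then (2 * real N - real K0 - 1) / real N
         else 0)" for K0
  proof (cases "N \<le> K0 + 1")
    case True
    from rq[OF assms True] show ?thesis
      unfolding delay_sbv[OF assms] sbv0 by (rule part1[OF assms])
  next
    case False
    then have "?r K0 = 0" by simp
    then show ?thesis using False unfolding delay_sbv[OF assms] sbv0 by simp
  qed
  show "pmf (delay_pmf N K0) l =
        (if K0 + 1 \<le> l * N then 0
         else if K0 \<le> (l + 1) * N - 1 then (real K0 - real l * real N + 1) / real N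
         else if K0 \<le> (l + 2) * N - 2 then ((real l + 2) * real N - real K0 - 1) / real N
         else 0)" if l: "l \<ge> 1" for l K0
  proof (cases "N \<le> K0 + 1")
    case True
    from rq[OF assms True] show ?thesis
      unfolding delay_sbv[OF assms] sbvl by (rule part2[OF assms _ _ l])
  next
    case False
    then have "?r K0 = 0" by simp
    moreover have "K0 + 1 \<le> l * N"
    proof -
      have "1 * N \<le> l * N" using l by (rule mult_le_mono1)
      then show ?thesis using False by linarith
    qed
    ultimately show ?thesis using l unfolding delay_sbv[OF assms] sbvl by simp
  qed
  show "pmf (bind_pmf K (\<lambda>k. delay_pmf N k)) l = (\<Sum>k. pmf K k * pmf (delay_pmf N k) l)"
    for K :: "nat pmf" and l
    by (rule pmf_bind_nat_series)
qed

end
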